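(* If $G$ is a connected bipartite graph of order $n$ with minimum degree $1$, then ${\rm I}_e(G)\le n-1$.
   Context: All graphs are finite and simple. A graph is locally irregular if no two adjacent vertices have the same degree. An edge-irregulator of a graph $G$ is a set $S\subseteq E(G)$ such that $G-S$ is locally irregular; ${\rm I}_e(G)$ is the minimum cardinality of an edge-irregulator of $G$. *)

theory Defs
  imports Main
begin

definition graph :: "'a set \<Rightarrow> 'a set set \<Rightarrow> bool" where
  "graph V E \<longleftrightarrow> finite V \<and> (\<forall>e\<in>E. e \<subseteq> V \<and> card e = 2)"

definition degree :: "'a set set \<Rightarrow> 'a \<Rightarrow> nat" where
  "degree E v = card {e \<in> E. v \<in> e}"

definition adj :: "'a set set \<Rightarrow> 'a \<Rightarrow> 'a \<Rightarrow> bool" where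
  "adj E u v \<longleftrightarrow> {u, v} \<in> E"

fun walk :: "'a set set \<Rightarrow> 'a list \<Rightarrow> bool" where
  "walk E [] = False"
| "walk E [v] = True"
| "walk E (u # v # vs) = (adj E u v \<and> walk E (v # vs))"

definition connected :: "'a set \<Rightarrow> 'a set set \<Rightarrow> bool" where
  "connected V E \<longleftrightarrow> V \<noteq> {} \<and>
     (\<forall>u\<in>V. \<forall>v\<in>V. \<exists>p. walk E p \<and> hd p = u \<and> last p = v)"

definition bipartite :: "'a set \<Rightarrow> 'a set set \<Rightarrow> bool" where
  "bipartite V E \<longleftrightarrow> (\<exists>A B. A \<union> B = V \<and> A \<inter> B = {} \<and>
      (\<forall>e\<in>E. \<exists>a\<in>A. \<exists>b\<in>B. e = {a, b}))"

definition min_degree :: "'a set \<Rightarrow> 'a set set \<Rightarrow> nat" where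
  "min_degree V E = Min (degree E ` V)"

definition locally_irregular :: "'a set set \<Rightarrow> bool" where
  "locally_irregular E \<longleftrightarrow> (\<forall>u v. adj E u v \<longrightarrow> degree E u \<noteq> degree E v)"

definition edge_irregulator :: "'a set set \<Rightarrow> 'a set set \<Rightarrow> bool" where
  "edge_irregulator E S \<longleftrightarrow> S \<subseteq> E \<and> locally_irregular (E - S)"

text \<open>Minimum cardinality of an edge-irregulator (E itself always is one).\<close>
definition Ie :: "'a set set \<Rightarrow> nat" where
  "Ie E = (LEAST k. \<exists>S. edge_irregulator E S \<and> card S = k)"

end

theory Submission
  imports Defs
begin

lemma degree_insert:
  assumes "finite S" "e \<notin> S"
  shows "degree (insert e S) w = degree S w + (if w \<in> e then 1 else 0)"
proof (cases "w \<in> e")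
  case True
  have "{e' \<in> insert e S. w \<in> e'} = insert e {e' \<in> S. w \<in> e'}" using True by auto
  then show ?thesis using assms True by (simp add: degree_def)
next
  case False
  have "{e' \<in> insert e S. w \<in> e'} = {e' \<in> S. w \<in> e'}" using False by auto
  then show ?thesis using False by (simp add: degree_def)
qed

lemma degree_diff:
  assumes "finite E" "S \<subseteq> E"
  shows "degree (E - S) w + degree S w = degree E w"
proof -
  have "{e \<in> E. w \<in> e} = {e \<in> E - S. w \<in> e} \<union> {e \<in> S. w \<in> e}" using assms by auto
  moreover have "card ({e \<in> E - S. w \<in> e} \<union> {e \<in> S. w \<in> e}) = card {e \<in> E - S. w \<in> e} + card {e \<in> S. w \<in> e}"
    apply (rule card_Un_disjoint) using assms by (auto intro: rev_finite_subset)
  ultimately show ?thesis by (simp add: degree_def)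
qed

lemma walk_cross:
  "walk E p \<Longrightarrow> hd p \<in> X \<Longrightarrow> last p \<notin> X \<Longrightarrow> \<exists>a b. {a,b} \<in> E \<and> a \<in> X \<and> b \<notin> X"
  by (induction E p rule: walk.induct) (auto simp: adj_def split: if_splits)

lemma finite_E: "graph V E \<Longrightarrow> finite E"
  unfolding graph_def by (meson PowI finite_Pow_iff finite_subset subsetI)

definition Q :: "'a set set \<Rightarrow> 'a set \<Rightarrow> bool" where
  "Q E X \<longleftrightarrow> (\<forall>T \<subseteq> X. even (card T) \<longrightarrow>
     (\<exists>S \<subseteq> E. (\<forall>e\<in>S. e \<subseteq> X) \<and> card S \<le> card X - 1 \<and> (\<forall>w. odd (degree S w) \<longleftrightarrow> w \<in> T)))"

lemma grow:
  assumes G: "graph V E" and C: "connected V E"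
  shows "n \<ge> 1 \<Longrightarrow> n \<le> card V \<Longrightarrow> \<exists>X \<subseteq> V. card X = n \<and> Q E X"
proof (induction n rule: nat_induct_at_least)
  case base
  from C obtain x0 where x0: "x0 \<in> V" unfolding connected_def by auto
  have "Q E {x0}" unfolding Q_def
  proof (intro allI impI)
    fix T assume "T \<subseteq> {x0}" "even (card T)"
    then have "T = {} \<or> T = {x0}" by (simp add: subset_singleton_iff)
    then have "T = {}" using \<open>even (card T)\<close> by auto
    then show "\<exists>S \<subseteq> E. (\<forall>e\<in>S. e \<subseteq> {x0}) \<and> card S \<le> card {x0} - 1 \<and> (\<forall>w. odd (degree S w) \<longleftrightarrow> w \<in> T)"
      by (intro exI[of _ "{}"]) (auto simp: degree_def)
  qed
  then show ?case using x0 by (intro exI[of _ "{x0}"]) auto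
next
  case (Suc n)
  have fV: "finite V" using G unfolding graph_def by auto
  have fE: "finite E" using finite_E G by auto
  from Suc obtain X where X: "X \<subseteq> V" "card X = n" "Q E X" by auto
  have fX: "finite X" using finite_subset[OF X(1) fV] .
  have "X \<noteq> V" using X Suc by auto
  then obtain y0 where y0: "y0 \<in> V" "y0 \<notin> X" using X by auto
  have "X \<noteq> {}" using X Suc by auto
  then obtain x0 where x0: "x0 \<in> X" by auto
  from C obtain p where "walk E p" "hd p = x0" "last p = y0"
    unfolding connected_def using x0 y0 X by blast
  then obtain x y where xy: "{x,y} \<in> E" "x \<in> X" "y \<notin> X"
    using walk_cross[of E p X] x0 y0 by auto
  have yV: "y \<in> V" using xy G unfolding graph_def by auto
  have xney: "x \<noteq> y" using xy by auto
  have "Q E (insert y X)" unfolding Q_def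
  proof (intro allI impI)
    fix T assume T: "T \<subseteq> insert y X" "even (card T)"
    have fT: "finite T" using finite_subset[OF T(1)] fX by simp
    show "\<exists>S \<subseteq> E. (\<forall>e\<in>S. e \<subseteq> insert y X) \<and> card S \<le> card (insert y X) - 1 \<and> (\<forall>w. odd (degree S w) \<longleftrightarrow> w \<in> T)"
    proof (cases "y \<in> T")
      case False
      then have "T \<subseteq> X" using T by auto
      then obtain S where "S \<subseteq> E" "\<forall>e\<in>S. e \<subseteq> X" "card S \<le> card X - 1" "\<forall>w. odd (degree S w) \<longleftrightarrow> w \<in> T"
        using X(3)[unfolded Q_def, rule_format, OF \<open>T \<subseteq> X\<close> T(2)] by blast
      moreover have "card S \<le> card (insert y X) - 1" using \<open>card S \<le> card X - 1\<close> fX xy by simp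
      moreover have "\<forall>e\<in>S. e \<subseteq> insert y X" using \<open>\<forall>e\<in>S. e \<subseteq> X\<close> by blast
      ultimately show ?thesis by blast
    next
      case True
      define T' where "T' = (if x \<in> T then T - {y,x} else insert x (T - {y}))"
      have T'X: "T' \<subseteq> X" using T xy unfolding T'_def by auto
      have "T \<noteq> {}" using True by auto
      then have cT: "card T \<ge> 1" using fT by (simp add: Suc_le_eq card_gt_0_iff)
      have "even (card T')"
      proof (cases "x \<in> T")
        case True2: True
        have "card T' = card T - 2" unfolding T'_def using True2 True fT xney by (simp add: card_Diff_subset)
        moreover have "card T \<ge> 2"
        proof -
          have "{x,y} \<subseteq> T" using True True2 by auto
          then have "card {x,y} \<le> card T" by (rule card_mono[OF fT])
          then show ?thesis using xney by simp
        qed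
        ultimately show ?thesis using T by auto
      next
        case False2: False
        have "card T' = card T"
        proof -
          have "x \<notin> T - {y}" using False2 by simp
          then have "card T' = Suc (card (T - {y}))" unfolding T'_def using False2 fT by simp
          also have "card (T - {y}) = card T - 1" using True fT by simp
          finally show ?thesis using cT by simp
        qed
        then show ?thesis using T by auto
      qed
      then obtain S' where S': "S' \<subseteq> E" "\<forall>e\<in>S'. e \<subseteq> X" "card S' \<le> card X - 1" "\<forall>w. odd (degree S' w) \<longleftrightarrow> w \<in> T'"
        using X(3)[unfolded Q_def, rule_format, OF T'X \<open>even (card T')\<close>] by blast
      have fS': "finite S'" using finite_subset[OF S'(1) fE] .
      have nin: "{x,y} \<notin> S'" using S' xy by auto
      define S where "S = insert {x,y} S'"
      have "S \<subseteq> E" using S' xy unfolding S_def by auto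
      moreover have "\<forall>e\<in>S. e \<subseteq> insert y X" using S' xy unfolding S_def by auto
      moreover have "card S \<le> card (insert y X) - 1"
        unfolding S_def using fS' nin S' fX xy X Suc by simp
      moreover have "\<forall>w. odd (degree S w) \<longleftrightarrow> w \<in> T"
      proof
        fix w
        have "degree S w = degree S' w + (if w \<in> {x,y} then 1 else 0)"
          unfolding S_def using degree_insert[OF fS' nin] by simp
        moreover have dS: "odd (degree S' w) \<longleftrightarrow> w \<in> T'" using S'(4) by blast
        moreover have "y \<notin> T'" unfolding T'_def using xney y0 xy by auto
        ultimately show "odd (degree S w) \<longleftrightarrow> w \<in> T"
        proof (cases "w = x")
          case True3: True
          have "x \<in> T' \<longleftrightarrow> x \<notin> T" unfolding T'_def using xney by auto
          then show ?thesis using True3 \<open>degree S w = _\<close> dS by simp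
        next
          case False3: False
          show ?thesis
          proof (cases "w = y")
            case True4: True
            then show ?thesis using \<open>degree S w = _\<close> dS \<open>y \<notin> T'\<close> True by simp
          next
            case False4: False
            have "w \<in> T' \<longleftrightarrow> w \<in> T" unfolding T'_def using False3 False4 by auto
            then show ?thesis using \<open>degree S w = _\<close> dS False3 False4 by simp
          qed
        qed
      qed
      ultimately show ?thesis by blast
    qed
  qed
  moreover have "insert y X \<subseteq> V" using X yV by auto
  moreover have "card (insert y X) = Suc n" using fX xy X by simp
  ultimately show ?case by blast
qed

lemma main_aux:
  assumes G: "graph V E" and C: "connected V E" and AB: "A \<union> B = V" "A \<inter> B = {}"
    and bip: "\<forall>e\<in>E. \<exists>a\<in>A. \<exists>b\<in>B. e = {a,b}" and vA: "v \<in> A" and dv: "degree E v = 1"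
  shows "\<exists>S. edge_irregulator E S \<and> card S \<le> card V - 1"
proof -
  have fV: "finite V" using G unfolding graph_def by auto
  have fE: "finite E" using finite_E G by auto
  define want where "want w \<longleftrightarrow> w \<in> A - {v}" for w
  define T0 where "T0 = {w \<in> V - {v}. odd (degree E w) \<noteq> want w}"
  define T where "T = (if even (card T0) then T0 else insert v T0)"
  have fT0: "finite T0" using fV unfolding T0_def by auto
  have vV: "v \<in> V" using vA AB by auto
  have TV: "T \<subseteq> V" unfolding T_def T0_def using vV by auto
  have eT: "even (card T)" unfolding T_def using fT0 by (auto simp: T0_def)
  have "V \<noteq> {}" using vV by auto
  then have V1: "card V \<ge> 1" using fV by (simp add: Suc_le_eq card_gt_0_iff)
  obtain X where X: "X \<subseteq> V" "card X = card V" "Q E X" using grow[OF G C V1] by auto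
  have "X = V" using card_subset_eq[OF fV X(1) X(2)] .
  then obtain S where S: "S \<subseteq> E" "card S \<le> card V - 1" "\<forall>w. odd (degree S w) \<longleftrightarrow> w \<in> T"
    using X(3)[unfolded Q_def \<open>X = V\<close>, rule_format, OF TV eT] by blast
  have par: "odd (degree (E - S) w) \<longleftrightarrow> want w" if "w \<in> V" "w \<noteq> v" for w
  proof -
    have "degree (E - S) w + degree S w = degree E w" using degree_diff[OF fE S(1)] .
    moreover have "w \<in> T \<longleftrightarrow> odd (degree E w) \<noteq> want w" using that unfolding T_def T0_def by auto
    ultimately show ?thesis using S(3) by (metis even_add)
  qed
  have "locally_irregular (E - S)" unfolding locally_irregular_def
  proof (intro allI impI)
    fix a b assume "adj (E - S) a b"
    then have ab: "{a,b} \<in> E - S" unfolding adj_def by auto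
    then obtain a' b' where ab': "a' \<in> A" "b' \<in> B" "{a,b} = {a',b'}" using bip by blast
    have b'V: "b' \<in> V" "b' \<noteq> v" using ab' AB vA by auto
    have eb: "even (degree (E - S) b')" using par[OF b'V] ab' AB unfolding want_def by auto
    have oa: "odd (degree (E - S) a')"
    proof (cases "a' = v")
      case False
      then show ?thesis using par[of a'] ab' AB unfolding want_def by auto
    next
      case True
      have "{a',b'} \<in> {e \<in> E - S. v \<in> e}" using ab ab' True by auto
      moreover have "finite {e \<in> E - S. v \<in> e}" using fE by auto
      ultimately have "card {e \<in> E - S. v \<in> e} > 0" by (auto simp: card_gt_0_iff)
      then have "degree (E - S) v \<ge> 1" unfolding degree_def by simp
      moreover have "degree (E - S) v \<le> 1" using degree_diff[OF fE S(1), of v] dv by auto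
      ultimately show ?thesis using True by auto
    qed
    have "degree (E - S) a' \<noteq> degree (E - S) b'" using oa eb by auto
    then show "degree (E - S) a \<noteq> degree (E - S) b" using ab'(3) by (auto simp: doubleton_eq_iff)
  qed
  then show ?thesis using S unfolding edge_irregulator_def by blast
qed

theorem theorem6:
  fixes V :: "'a set" and E :: "'a set set"
  assumes "graph V E"
    and "connected V E"
    and "bipartite V E"
    and "min_degree V E = 1"
  shows "Ie E \<le> card V - 1"
proof -
  have fV: "finite V" using assms(1) unfolding graph_def by auto
  have ne: "V \<noteq> {}" using assms(2) unfolding connected_def by auto
  have "Min (degree E ` V) \<in> degree E ` V" using fV ne by (intro Min_in) auto
  then obtain v where v: "v \<in> V" "degree E v = 1" using assms(4) unfolding min_degree_def by auto
  obtain A B where AB: "A \<union> B = V" "A \<inter> B = {}" "\<forall>e\<in>E. \<exists>a\<in>A. \<exists>b\<in>B. e = {a,b}"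
    using assms(3) unfolding bipartite_def by blast
  obtain S where S: "edge_irregulator E S" "card S \<le> card V - 1"
  proof (cases "v \<in> A")
    case True
    then show ?thesis using main_aux[OF assms(1,2) AB True v(2)] that by blast
  next
    case False
    then have "v \<in> B" using v AB by auto
    moreover have "B \<union> A = V" "B \<inter> A = {}" using AB by auto
    moreover have "\<forall>e\<in>E. \<exists>a\<in>B. \<exists>b\<in>A. e = {a,b}" 
    proof
      fix e assume "e \<in> E"
      then obtain a b where "a \<in> A" "b \<in> B" "e = {a,b}" using AB(3) by blast
      then show "\<exists>a\<in>B. \<exists>b\<in>A. e = {a,b}" by (auto simp: insert_commute)
    qed
    ultimately show ?thesis using main_aux[OF assms(1,2), of B A v] v(2) that by blast
  qed
  have "Ie E \<le> card S" unfolding Ie_def by (rule Least_le) (use S in blast)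
  then show ?thesis using S by simp
qed

end
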